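(* Fix a positive integer $p$. For $n=pf$ let $A_{f\text{-APD},\mathrm{BAL},\mathrm{MU},4,n}$ denote the maximum size of a code $\mathcal{C}\subseteq\{\mathtt{A},\mathtt{T},\mathtt{C},\mathtt{G}\}^n$ that is simultaneously $f$-APD, balanced and MU. Then there exists a constant $c_3>0$ (depending only on $p$) such that for all sufficiently large even $f$, with $n=pf$, \[ c_3\,\frac{\binom{n}{n/2}2^n}{n}\le A_{f\text{-APD},\mathrm{BAL},\mathrm{MU},4,n}\le\frac{\binom{n}{n/2}2^n}{n}. \]
   Context: Sequences are over $\{\mathtt{A},\mathtt{T},\mathtt{C},\mathtt{G}\}$ (identified with $\mathbb{F}_4$). For $\mathbf{a}=(a_1,\dots,a_n)$ write $\mathbf{a}_i^j=(a_i,\dots,a_j)$ if $i\le j$ and $(a_i,a_{i-1},\dots,a_j)$ if $i>j$; the complement $\bar{\mathbf{a}}$ applies $\mathtt{A}\leftrightarrow\mathtt{T}$, $\mathtt{C}\leftrightarrow\mathtt{G}$ coordinatewise. A sequence is balanced if exactly $n/2$ entries lie in $\{\mathtt{G},\mathtt{C}\}$; a code is balanced if every codeword is. A code $\mathcal{C}$ is MU if for all not necessarily distinct $\mathbf{a},\mathbf{b}\in\mathcal{C}$ and all $1\le l<n$, $\mathbf{a}_1^l\ne\mathbf{b}_{n-l+1}^n$. It is $f$-APD if for all not necessarily distinct $\mathbf{a},\mathbf{b}\in\mathcal{C}$ and all $1\le i,j\le n+1-f$, $\bar{\mathbf{a}}_i^{f+i-1}\ne\mathbf{b}_j^{f+j-1}$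 and $\bar{\mathbf{a}}_i^{f+i-1}\ne\mathbf{b}_{f+j-1}^{j}$. *)

theory Defs
  imports Complex_Main
begin

datatype nuc = A | T | C | G

fun compl :: "nuc \<Rightarrow> nuc" where
  "compl A = T" | "compl T = A" | "compl C = G" | "compl G = C"

text \<open>Sequences are lists; positions are 1-based in the paper.
  window w i f = (w_i, ..., w_{f+i-1}) for 1-based i.\<close>
definition window :: "nuc list \<Rightarrow> nat \<Rightarrow> nat \<Rightarrow> nuc list" where
  "window w i f = take f (drop (i - 1) w)"

definition balanced :: "nuc list \<Rightarrow> bool" where
  "balanced w \<longleftrightarrow> 2 * length (filter (\<lambda>x. x = G \<or> x = C) w) = length w"

definition balanced_code :: "nuc list set \<Rightarrow> bool" where
  "balanced_code K \<longleftrightarrow> (\<forall>w\<in>K. balanced w)"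

definition MU :: "nat \<Rightarrow> nuc list set \<Rightarrow> bool" where
  "MU n K \<longleftrightarrow> (\<forall>a\<in>K. \<forall>b\<in>K. \<forall>l. 1 \<le> l \<and> l < n \<longrightarrow> take l a \<noteq> drop (n - l) b)"

definition APD :: "nat \<Rightarrow> nat \<Rightarrow> nuc list set \<Rightarrow> bool" where
  "APD f n K \<longleftrightarrow> (\<forall>a\<in>K. \<forall>b\<in>K. \<forall>i j. 1 \<le> i \<and> i \<le> n + 1 - f \<and> 1 \<le> j \<and> j \<le> n + 1 - f \<longrightarrow>
      map compl (window a i f) \<noteq> window b j f \<and>
      map compl (window a i f) \<noteq> rev (window b j f))"

definition A_max :: "nat \<Rightarrow> nat \<Rightarrow> nat" where
  "A_max f n = Max {card K | K. K \<subseteq> {w. length w = n} \<and> APD f n K \<and> balanced_code K \<and> MU n K}"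

end

theory Submission
  imports Defs "HOL-Library.Discrete_Functions" "HOL-Real_Asymp.Real_Asymp"
begin


definition ex :: "bool list \<Rightarrow> int" where
  "ex xs = sum_list (map (\<lambda>b. if b then 1 else -1) xs)"

lemma ex_Nil[simp]: "ex [] = 0" by (simp add: ex_def)
lemma ex_Cons[simp]: "ex (b # xs) = (if b then 1 else -1) + ex xs" by (simp add: ex_def)
lemma ex_append[simp]: "ex (xs @ ys) = ex xs + ex ys" by (simp add: ex_def)
lemma ex_ge: "ex xs \<ge> - int (length xs)" by (induct xs) auto
lemma ex_le: "ex xs \<le> int (length xs)" by (induct xs) auto
lemma ex_rev[simp]: "ex (rev xs) = ex xs" by (induct xs) auto
lemma ex_not[simp]: "ex (map Not xs) = - ex xs" by (induct xs) auto

definition Lists :: "nat \<Rightarrow> bool list set" where "Lists n = {xs. length xs = n}"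

lemma card_Lists: "card (Lists n) = 2 ^ n"
proof -
  have "Lists n = {xs. set xs \<subseteq> UNIV \<and> length xs = n}" by (auto simp: Lists_def)
  then show ?thesis using card_lists_length_eq[of "UNIV::bool set" n] by simp
qed

lemma finite_Lists[simp]: "finite (Lists n)"
proof -
  have "Lists n = {xs. set xs \<subseteq> UNIV \<and> length xs = n}" by (auto simp: Lists_def)
  then show ?thesis using finite_lists_length_eq[of "UNIV::bool set" n] by simp
qed

lemma Lists_Suc: "Lists (Suc n) = Cons True ` Lists n \<union> Cons False ` Lists n"
  by (auto simp: Lists_def length_Suc_conv)

lemma sum_Lists_Suc:
  "(\<Sum>xs\<in>Lists (Suc n). g xs) = (\<Sum>xs\<in>Lists n. g (True # xs)) + (\<Sum>xs\<in>Lists n. g (False # xs))"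
proof -
  have "(\<Sum>xs\<in>Lists (Suc n). g xs) = (\<Sum>xs\<in>Cons True ` Lists n. g xs) + (\<Sum>xs\<in>Cons False ` Lists n. g xs)"
    unfolding Lists_Suc by (rule sum.union_disjoint) auto
  also have "\<dots> = (\<Sum>xs\<in>Lists n. g (True # xs)) + (\<Sum>xs\<in>Lists n. g (False # xs))"
    by (simp add: sum.reindex)
  finally show ?thesis .
qed

lemma mom1: "(\<Sum>xs\<in>Lists n. real_of_int (ex xs)) = 0"
proof (induct n)
  case 0 then show ?case by (simp add: Lists_def)
next
  case (Suc n)
  have "(\<Sum>xs\<in>Lists (Suc n). real_of_int (ex xs)) = (\<Sum>xs\<in>Lists n. 2 * real_of_int (ex xs))"
    by (simp add: sum_Lists_Suc sum.distrib[symmetric] algebra_simps)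
  also have "\<dots> = 0" by (simp add: sum_distrib_left[symmetric] Suc)
  finally show ?case .
qed

lemma mom2: "(\<Sum>xs\<in>Lists n. real_of_int (ex xs) ^ 2) = real n * 2 ^ n"
proof (induct n)
  case 0 then show ?case by (simp add: Lists_def)
next
  case (Suc n)
  have "(\<Sum>xs\<in>Lists (Suc n). real_of_int (ex xs) ^ 2)
     = (\<Sum>xs\<in>Lists n. 2 * real_of_int (ex xs) ^ 2 + 2)"
    by (simp add: sum_Lists_Suc sum.distrib[symmetric] power2_eq_square algebra_simps)
  also have "\<dots> = 2 * (real n * 2 ^ n) + 2 * 2 ^ n"
    by (simp add: sum.distrib sum_distrib_left[symmetric] Suc card_Lists)
  finally show ?case by (simp add: algebra_simps)
qed

lemma mom4: "(\<Sum>xs\<in>Lists n. real_of_int (ex xs) ^ 4) = (3 * real n ^ 2 - 2 * real n) * 2 ^ n"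
proof (induct n)
  case 0 then show ?case by (simp add: Lists_def)
next
  case (Suc n)
  have e: "\<And>e::real. (1 + e) ^ 4 + (e - 1) ^ 4 = 2 * e ^ 4 + 12 * e^2 + 2"
    by (simp add: power_def algebra_simps eval_nat_numeral)
  have "(\<Sum>xs\<in>Lists (Suc n). real_of_int (ex xs) ^ 4)
     = (\<Sum>xs\<in>Lists n. 2 * real_of_int (ex xs) ^ 4 + 12 * real_of_int (ex xs) ^ 2 + 2)"
    by (simp add: sum_Lists_Suc sum.distrib[symmetric] e)
  also have "\<dots> = 2 * ((3 * real n ^ 2 - 2 * real n) * 2 ^ n) + 12 * (real n * 2 ^ n) + 2 * 2 ^ n"
    by (simp add: sum.distrib sum_distrib_left[symmetric] Suc mom2 card_Lists)
  finally show ?case by (simp add: algebra_simps power2_eq_square)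
qed


lemma pz_sym:
  assumes "n > 0"
  shows "real (card {xs\<in>Lists n. 0 \<le> ex xs \<and> real n \<le> 2 * real_of_int (ex xs) ^ 2}) \<ge> 2 ^ n / 24"
proof -
  define e where "e xs = real_of_int (ex xs)" for xs
  define G where "G = {xs\<in>Lists n. real n \<le> 2 * e xs ^ 2}"
  define B where "B = {xs\<in>Lists n. \<not> real n \<le> 2 * e xs ^ 2}"
  have fG: "finite G" "finite B" by (auto simp: G_def B_def)
  have UGB: "Lists n = G \<union> B" "G \<inter> B = {}" by (auto simp: G_def B_def)
  have s0: "(\<Sum>xs\<in>Lists n. e xs ^ 2) = (\<Sum>xs\<in>G. e xs ^ 2) + (\<Sum>xs\<in>B. e xs ^ 2)"
    unfolding UGB(1) by (rule sum.union_disjoint[OF fG UGB(2)])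
  have s1: "(\<Sum>xs\<in>B. e xs ^ 2) \<le> (\<Sum>xs\<in>B. real n / 2)"
    by (rule sum_mono) (auto simp: B_def)
  have "card B \<le> card (Lists n)" unfolding UGB(1) by (intro card_mono) (use fG in auto)
  then have s3: "(\<Sum>xs\<in>B. real n / 2) \<le> real n / 2 * 2 ^ n"
    by (simp add: card_Lists) (metis mult_left_mono of_nat_0_le_iff of_nat_le_iff of_nat_numeral of_nat_power divide_nonneg_nonneg zero_le_numeral mult.commute)
  have s2: "(\<Sum>xs\<in>G. e xs ^ 2) \<ge> real n * 2 ^ n / 2"
    using mom2[of n] s0 s1 s3 by (simp add: e_def)
  define M where "M = 6 * real n"
  have pw: "2 * M * e xs ^ 2 \<le> M ^ 2 + e xs ^ 4" for xs
  proof -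
    have "0 \<le> (e xs ^ 2 - M) ^ 2" by simp
    then show ?thesis by (simp add: power2_eq_square power4_eq_xxxx algebra_simps)
  qed
  have "2 * M * (\<Sum>xs\<in>G. e xs ^ 2) = (\<Sum>xs\<in>G. 2 * M * e xs ^ 2)" by (simp add: sum_distrib_left)
  also have "\<dots> \<le> (\<Sum>xs\<in>G. M ^ 2 + e xs ^ 4)" by (rule sum_mono) (rule pw)
  also have "\<dots> = M ^ 2 * card G + (\<Sum>xs\<in>G. e xs ^ 4)" by (simp add: sum.distrib)
  also have "(\<Sum>xs\<in>G. e xs ^ 4) \<le> (\<Sum>xs\<in>Lists n. e xs ^ 4)"
    using UGB fG by (intro sum_mono2) auto
  also have "\<dots> \<le> 3 * real n ^ 2 * 2 ^ n" 
  proof -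
    have "0 \<le> real n * 2 ^ n" by simp
    moreover have "(\<Sum>xs\<in>Lists n. e xs ^ 4) = (3 * real n ^ 2 - 2 * real n) * 2 ^ n" using mom4 by (simp add: e_def)
    moreover have "(3 * real n ^ 2 - 2 * real n) * 2 ^ n = 3 * real n ^ 2 * 2 ^ n - 2 * (real n * 2 ^ n)" by (simp add: algebra_simps)
    ultimately show ?thesis by linarith
  qed
  finally have "2 * M * (real n * 2 ^ n / 2) \<le> M ^ 2 * card G + 3 * real n ^ 2 * 2 ^ n"
    using s2 M_def mult_left_mono[OF s2, of "2*M"] by simp
  then have "6 * real n ^ 2 * 2 ^ n \<le> 36 * real n ^ 2 * card G + 3 * real n ^ 2 * 2 ^ n"
    by (simp add: M_def power2_eq_square algebra_simps)
  then have cG: "real (card G) \<ge> 2 ^ n / 12" using assms by (simp add: power2_eq_square field_simps)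
  define Gp where "Gp = {xs\<in>Lists n. 0 \<le> ex xs \<and> real n \<le> 2 * real_of_int (ex xs) ^ 2}"
  define Gm where "Gm = {xs\<in>Lists n. ex xs \<le> 0 \<and> real n \<le> 2 * real_of_int (ex xs) ^ 2}"
  have "Gm = map Not ` Gp"
  proof
    show "Gm \<subseteq> map Not ` Gp"
    proof
      fix xs assume "xs \<in> Gm"
      then have "map Not xs \<in> Gp" "xs = map Not (map Not xs)" by (auto simp: Gm_def Gp_def Lists_def comp_def)
      then show "xs \<in> map Not ` Gp" by blast
    qed
  next
    show "map Not ` Gp \<subseteq> Gm"
    proof
      fix ys assume "ys \<in> map Not ` Gp"
      then obtain xs where "xs \<in> Gp" "ys = map Not xs" by blast
      then show "ys \<in> Gm" by (simp add: Gm_def Gp_def Lists_def)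
    qed
  qed
  moreover have "inj_on (map Not) Gp"
  proof (rule inj_onI)
    fix x y :: "bool list" assume "map Not x = map Not y"
    then have "map Not (map Not x) = map Not (map Not y)" by simp
    then show "x = y" by (simp add: comp_def)
  qed
  ultimately have cm: "card Gm = card Gp" by (simp add: card_image)
  have "G \<subseteq> Gp \<union> Gm" by (auto simp: G_def Gp_def Gm_def e_def)
  moreover have "finite Gp" "finite Gm" by (simp_all add: Gp_def Gm_def)
  ultimately have "card G \<le> card Gp + card Gm"
    by (meson card_Un_le card_mono finite_Un le_trans)
  then show ?thesis using cG cm unfolding Gp_def by simp
qed


lemma mom2c: "(\<Sum>xs\<in>Lists n. (c + real_of_int (ex xs)) ^ 2) = 2 ^ n * c ^ 2 + real n * 2 ^ n"
proof -
  have "(\<Sum>xs\<in>Lists n. (c + real_of_int (ex xs)) ^ 2)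
     = (\<Sum>xs\<in>Lists n. c ^ 2 + 2 * c * real_of_int (ex xs) + real_of_int (ex xs) ^ 2)"
    by (simp add: power2_eq_square algebra_simps)
  also have "\<dots> = card (Lists n) * c ^ 2 + 2 * c * (\<Sum>xs\<in>Lists n. real_of_int (ex xs)) + real n * 2 ^ n"
    by (simp add: sum.distrib sum_distrib_left mom2)
  finally show ?thesis by (simp add: mom1 card_Lists)
qed

definition Bad :: "real \<Rightarrow> real \<Rightarrow> nat \<Rightarrow> bool list set" where
  "Bad t c n = {xs\<in>Lists n. \<exists>k\<le>n. t \<le> \<bar>c + real_of_int (ex (take k xs))\<bar>}"

lemma kolm_gen:
  assumes "0 \<le> t"
  shows "t ^ 2 * card (Bad t c n) \<le> (\<Sum>xs\<in>Bad t c n. (c + real_of_int (ex xs)) ^ 2)"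
  using assms
proof (induct n arbitrary: c)
  case 0
  show ?case
  proof (cases "t \<le> \<bar>c\<bar>")
    case True
    then have "Bad t c 0 = {[]}" by (auto simp: Bad_def Lists_def)
    moreover have "t ^ 2 \<le> c ^ 2" using True 0 by (metis abs_le_square_iff abs_of_nonneg)
    ultimately show ?thesis by simp
  next
    case False
    then have "Bad t c 0 = {}" by (auto simp: Bad_def Lists_def)
    then show ?thesis by simp
  qed
next
  case (Suc n)
  show ?case
  proof (cases "t \<le> \<bar>c\<bar>")
    case True
    then have "Bad t c (Suc n) = Lists (Suc n)" by (force simp: Bad_def)
    moreover have "t ^ 2 \<le> c ^ 2" using True Suc by (metis abs_le_square_iff abs_of_nonneg)
    moreover have "t ^ 2 * 2 ^ Suc n \<le> c ^ 2 * (2::real) ^ Suc n"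
      using \<open>t ^ 2 \<le> c ^ 2\<close> by (rule mult_right_mono) simp
    moreover have "0 \<le> real (Suc n) * (2::real) ^ Suc n" by simp
    moreover have "real (card (Lists (Suc n))) = 2 ^ Suc n" by (simp add: card_Lists)
    ultimately show ?thesis using mom2c[of c "Suc n"] by (simp only:) (metis (no_types, lifting) add_increasing2 mult.commute)
  next
    case False
    have eq: "Bad t c (Suc n) = Cons True ` Bad t (c+1) n \<union> Cons False ` Bad t (c-1) n"
    proof
      show "Bad t c (Suc n) \<subseteq> Cons True ` Bad t (c+1) n \<union> Cons False ` Bad t (c-1) n"
      proof
        fix xs assume xs: "xs \<in> Bad t c (Suc n)"
        then obtain b ys k where b: "xs = b # ys" "length ys = n" "k \<le> Suc n"
            "t \<le> \<bar>c + real_of_int (ex (take k xs))\<bar>"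
          by (auto simp: Bad_def Lists_def length_Suc_conv)
        have "k \<noteq> 0"
        proof
          assume "k = 0" then show False using b(4) False by simp
        qed
        then obtain k' where k': "k = Suc k'" by (cases k) auto
        show "xs \<in> Cons True ` Bad t (c+1) n \<union> Cons False ` Bad t (c-1) n"
        proof (cases b)
          case True
          have "c + real_of_int (ex (take k xs)) = (c + 1) + real_of_int (ex (take k' ys))"
            using b k' True by simp
          then have "ys \<in> Bad t (c+1) n" using b k' unfolding Bad_def Lists_def by auto
          then show ?thesis using b True by blast
        next
          case False
          have "c + real_of_int (ex (take k xs)) = (c - 1) + real_of_int (ex (take k' ys))"
            using b k' False by simp
          then have "ys \<in> Bad t (c-1) n" using b k' unfolding Bad_def Lists_def by auto
          then show ?thesis using b False by blast
        qed
      qed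
    next
      show "Cons True ` Bad t (c+1) n \<union> Cons False ` Bad t (c-1) n \<subseteq> Bad t c (Suc n)"
      proof
        fix xs assume "xs \<in> Cons True ` Bad t (c+1) n \<union> Cons False ` Bad t (c-1) n"
        then show "xs \<in> Bad t c (Suc n)"
        proof
          assume "xs \<in> Cons True ` Bad t (c+1) n"
          then obtain ys k where "xs = True # ys" "length ys = n" "k \<le> n" "t \<le> \<bar>c + 1 + real_of_int (ex (take k ys))\<bar>"
            by (auto simp: Bad_def Lists_def)
          moreover have "c + real_of_int (ex (take (Suc k) (True # ys))) = (c + 1) + real_of_int (ex (take k ys))" by simp
          ultimately show ?thesis unfolding Bad_def Lists_def by (auto intro!: exI[of _ "Suc k"])
        next
          assume "xs \<in> Cons False ` Bad t (c-1) n"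
          then obtain ys k where "xs = False # ys" "length ys = n" "k \<le> n" "t \<le> \<bar>c - 1 + real_of_int (ex (take k ys))\<bar>"
            by (auto simp: Bad_def Lists_def)
          moreover have "c + real_of_int (ex (take (Suc k) (False # ys))) = (c - 1) + real_of_int (ex (take k ys))" by simp
          ultimately show ?thesis unfolding Bad_def Lists_def by (auto intro!: exI[of _ "Suc k"])
        qed
      qed
    qed
    have fin: "finite (Bad t c' n)" for c' by (simp add: Bad_def)
    have dis: "Cons True ` Bad t (c+1) n \<inter> Cons False ` Bad t (c-1) n = {}" by auto
    have "(\<Sum>xs\<in>Bad t c (Suc n). (c + real_of_int (ex xs)) ^ 2)
       = (\<Sum>ys\<in>Bad t (c+1) n. (c + 1 + real_of_int (ex ys)) ^ 2) + (\<Sum>ys\<in>Bad t (c-1) n. (c - 1 + real_of_int (ex ys)) ^ 2)"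
    proof -
      have "(\<Sum>xs\<in>Bad t c (Suc n). (c + real_of_int (ex xs)) ^ 2)
         = (\<Sum>xs\<in>Cons True ` Bad t (c+1) n. (c + real_of_int (ex xs)) ^ 2) + (\<Sum>xs\<in>Cons False ` Bad t (c-1) n. (c + real_of_int (ex xs)) ^ 2)"
        unfolding eq by (rule sum.union_disjoint) (use fin dis in auto)
      also have "(\<Sum>xs\<in>Cons True ` Bad t (c+1) n. (c + real_of_int (ex xs)) ^ 2) = (\<Sum>ys\<in>Bad t (c+1) n. (c + real_of_int (ex (True # ys))) ^ 2)"
        by (rule sum.reindex_cong[of "Cons True"]) auto
      also have "(\<Sum>xs\<in>Cons False ` Bad t (c-1) n. (c + real_of_int (ex xs)) ^ 2) = (\<Sum>ys\<in>Bad t (c-1) n. (c + real_of_int (ex (False # ys))) ^ 2)"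
        by (rule sum.reindex_cong[of "Cons False"]) auto
      finally show ?thesis by (simp add: add.assoc algebra_simps)
    qed
    also have "\<dots> \<ge> t ^ 2 * card (Bad t (c+1) n) + t ^ 2 * card (Bad t (c-1) n)"
      using Suc.hyps[of "c+1"] Suc.hyps[of "c-1"] Suc.prems by linarith
    moreover have "card (Bad t c (Suc n)) = card (Bad t (c+1) n) + card (Bad t (c-1) n)"
      unfolding eq by (subst card_Un_disjoint) (use fin dis in \<open>auto simp: card_image\<close>)
    ultimately show ?thesis by (simp add: algebra_simps)
  qed
qed

lemma kolm:
  assumes "0 < t"
  shows "real (card (Bad t 0 n)) \<le> real n * 2 ^ n / t ^ 2"
proof -
  have "t ^ 2 * card (Bad t 0 n) \<le> (\<Sum>xs\<in>Bad t 0 n. (real_of_int (ex xs)) ^ 2)"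
    using kolm_gen[of t 0 n] assms by simp
  also have "\<dots> \<le> (\<Sum>xs\<in>Lists n. (real_of_int (ex xs)) ^ 2)"
    by (rule sum_mono2) (auto simp: Bad_def)
  finally show ?thesis using assms by (simp add: mom2 field_simps)
qed


definition Seg :: "real \<Rightarrow> real \<Rightarrow> nat \<Rightarrow> bool list set" where
  "Seg a t l = {xs\<in>Lists l. a \<le> real_of_int (ex xs) \<and> (\<forall>k\<le>l. \<bar>real_of_int (ex (take k xs))\<bar> < t)}"

lemma finite_Seg[simp]: "finite (Seg a t l)" by (simp add: Seg_def)

lemma seg_card:
  assumes "l > 0" "0 \<le> a" "a ^ 2 \<le> real l / 2" "t > 0" "t ^ 2 \<ge> 48 * real l"
  shows "real (card (Seg a t l)) \<ge> 2 ^ l / 48"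
proof -
  define Gp where "Gp = {xs\<in>Lists l. 0 \<le> ex xs \<and> real l \<le> 2 * real_of_int (ex xs) ^ 2}"
  have "Gp \<subseteq> Seg a t l \<union> Bad t 0 l"
  proof
    fix xs assume xs: "xs \<in> Gp"
    then have "a ^ 2 \<le> real_of_int (ex xs) ^ 2" "0 \<le> real_of_int (ex xs)" using assms(3) by (auto simp: Gp_def)
    then have "a \<le> real_of_int (ex xs)" using assms(2) by (meson power2_le_imp_le)
    then show "xs \<in> Seg a t l \<union> Bad t 0 l" using xs by (auto simp: Gp_def Seg_def Bad_def not_less)
  qed
  moreover have "finite (Bad t 0 l)" by (simp add: Bad_def)
  ultimately have "card Gp \<le> card (Seg a t l \<union> Bad t 0 l)" by (intro card_mono) auto
  also have "\<dots> \<le> card (Seg a t l) + card (Bad t 0 l)" by (rule card_Un_le)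
  finally have "card Gp \<le> card (Seg a t l) + card (Bad t 0 l)" .
  moreover have "real (card Gp) \<ge> 2 ^ l / 24" using pz_sym[OF assms(1)] by (simp add: Gp_def)
  moreover have "real (card (Bad t 0 l)) \<le> real l * 2 ^ l / t ^ 2" by (rule kolm) (rule assms)
  moreover have "real l * 2 ^ l / t ^ 2 \<le> 2 ^ l / 48"
  proof -
    have "real l * 2 ^ l \<le> t ^ 2 / 48 * 2 ^ l" using assms(5) by (intro mult_right_mono) auto
    then have "real l * 2 ^ l / t ^ 2 \<le> t ^ 2 / 48 * 2 ^ l / t ^ 2" using assms(4) by (intro divide_right_mono) auto
    also have "\<dots> = 2 ^ l / 48" using assms(4) by simp
    finally show ?thesis .
  qed
  ultimately show ?thesis by linarith
qed

fun Zs :: "real \<Rightarrow> real \<Rightarrow> nat list \<Rightarrow> bool list set" where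
  "Zs a t [] = {[]}"
| "Zs a t (l # ls) = (\<lambda>(x, y). x @ y) ` (Seg a t l \<times> Zs a t ls)"

lemma Zs_length: "z \<in> Zs a t ls \<Longrightarrow> length z = sum_list ls"
proof (induct ls arbitrary: z)
  case (Cons l ls)
  then obtain x y where "z = x @ y" "x \<in> Seg a t l" "y \<in> Zs a t ls" by auto
  with Cons show ?case by (simp add: Seg_def Lists_def)
qed simp

lemma finite_Zs[simp]: "finite (Zs a t ls)"
  by (induct ls) auto

lemma card_Zs: "card (Zs a t (l # ls)) = card (Seg a t l) * card (Zs a t ls)"
proof -
  have "inj_on (\<lambda>(x, y). x @ y) (Seg a t l \<times> Zs a t ls)"
  proof (rule inj_onI)
    fix u v assume "u \<in> Seg a t l \<times> Zs a t ls" "v \<in> Seg a t l \<times> Zs a t ls"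
      "(\<lambda>(x, y). x @ y) u = (\<lambda>(x, y). x @ y) v"
    moreover obtain x1 y1 x2 y2 where "u = (x1, y1)" "v = (x2, y2)" by (cases u, cases v) auto
    ultimately have "x1 @ y1 = x2 @ y2" "length x1 = length x2" by (auto simp: Seg_def Lists_def)
    then show "u = v" using \<open>u = (x1, y1)\<close> \<open>v = (x2, y2)\<close> by simp
  qed
  then show ?thesis by (simp add: card_image card_cartesian_product)
qed

lemma card_Zs_ge:
  assumes "\<forall>l\<in>set ls. real (card (Seg a t l)) \<ge> 2 ^ l / 48"
  shows "real (card (Zs a t ls)) \<ge> 2 ^ sum_list ls / 48 ^ length ls"
  using assms
proof (induct ls)
  case Nil then show ?case by simp
next
  case (Cons l ls)
  have "(2::real) ^ sum_list (l # ls) / 48 ^ length (l # ls) = (2 ^ l / 48) * (2 ^ sum_list ls / 48 ^ length ls)"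
    by (simp add: power_add)
  also have "\<dots> \<le> real (card (Seg a t l)) * real (card (Zs a t ls))"
    using Cons by (intro mult_mono) auto
  finally show ?case by (simp only: card_Zs of_nat_mult)
qed

lemma div_le1: "d \<le> Lm \<Longrightarrow> 0 < Lm \<Longrightarrow> d div Lm \<le> (1::nat)"
  using div_le_mono[of d Lm Lm] by simp

lemma amul: assumes "0 \<le> (a::real)" "i \<le> j + 1" shows "a * real i \<le> a * real j + a"
proof -
  have "real i \<le> real j + 1" using assms(2) by simp
  then have "a * real i \<le> a * (real j + 1)" using assms(1) by (rule mult_left_mono)
  then show ?thesis by (simp add: distrib_left)
qed

lemma amul1: assumes "0 \<le> (a::real)" "i \<le> 1" shows "a * real i \<le> a"
  using amul[OF assms(1), of i 0] assms(2) by simp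

lemma Zs_prefix:
  assumes "z \<in> Zs a t ls" "\<forall>l\<in>set ls. l \<le> Lm" "Lm > 0" "0 \<le> a" "0 \<le> t" "d \<le> length z"
  shows "a * real (d div Lm) - a - t \<le> real_of_int (ex (take d z))"
  using assms
proof (induct ls arbitrary: z d)
  case Nil then show ?case by simp
next
  case (Cons l ls)
  then obtain x y where xy: "z = x @ y" "x \<in> Seg a t l" "y \<in> Zs a t ls" by auto
  have lx: "length x = l" "l \<le> Lm" using xy Cons.prems by (auto simp: Seg_def Lists_def)
  show ?case
  proof (cases "d \<le> l")
    case True
    then have "d div Lm \<le> 1" using lx \<open>Lm > 0\<close> True by (intro div_le1) auto
    then have "a * real (d div Lm) \<le> a" by (rule amul1[OF \<open>0 \<le> a\<close>])
    moreover have "\<bar>real_of_int (ex (take d x))\<bar> < t" using xy True by (auto simp: Seg_def)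
    ultimately show ?thesis using xy lx True by simp
  next
    case False
    have "take d z = x @ take (d - l) y" using xy lx False by simp
    moreover have "a * real ((d - l) div Lm) - a - t \<le> real_of_int (ex (take (d - l) y))"
      using Cons.hyps[OF xy(3)] Cons.prems xy lx by auto
    moreover have "a \<le> real_of_int (ex x)" using xy by (auto simp: Seg_def)
    moreover have "d div Lm \<le> (d - l) div Lm + 1"
    proof -
      have "d \<le> (d - l) + Lm" using lx by simp
      then have "d div Lm \<le> ((d - l) + Lm) div Lm" by (rule div_le_mono)
      also have "\<dots> = (d - l) div Lm + 1" using \<open>Lm > 0\<close> by simp
      finally show ?thesis .
    qed
    then have "a * real (d div Lm) \<le> a * real ((d - l) div Lm) + a"
      by (rule amul[OF \<open>0 \<le> a\<close>])
    ultimately show ?thesis by simp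
  qed
qed

lemma ex_take_drop: "ex (take (m + d) x) = ex (take m x) + ex (take d (drop m x))"
  by (simp add: take_add)

lemma Zs_infix:
  assumes "z \<in> Zs a t ls" "\<forall>l\<in>set ls. l \<le> Lm" "Lm > 0" "0 \<le> a" "0 \<le> t" "m + d \<le> length z"
  shows "a * real (d div Lm) - 2 * a - 3 * t \<le> real_of_int (ex (take d (drop m z)))"
  using assms
proof (induct ls arbitrary: z m d)
  case Nil then show ?case by simp
next
  case (Cons l ls)
  then obtain x y where xy: "z = x @ y" "x \<in> Seg a t l" "y \<in> Zs a t ls" by auto
  have lx: "length x = l" "l \<le> Lm" using xy Cons.prems by (auto simp: Seg_def Lists_def)
  have bx: "\<bar>real_of_int (ex (take k x))\<bar> < t" if "k \<le> l" for k using xy that by (auto simp: Seg_def)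
  show ?case
  proof (cases "l \<le> m")
    case True
    then have "take d (drop m z) = take d (drop (m - l) y)" using xy lx by simp
    moreover have "a * real (d div Lm) - 2 * a - 3 * t \<le> real_of_int (ex (take d (drop (m - l) y)))"
      using Cons.hyps[OF xy(3)] Cons.prems xy lx True by auto
    ultimately show ?thesis by simp
  next
    case False
    show ?thesis
    proof (cases "m + d \<le> l")
      case True
      then have "d div Lm \<le> 1" using lx \<open>Lm > 0\<close> True by (intro div_le1) auto
      then have "a * real (d div Lm) \<le> a" by (rule amul1[OF \<open>0 \<le> a\<close>])
      moreover have tz: "take d (drop m z) = take d (drop m x)" using xy lx True by simp
      moreover have "real_of_int (ex (take (m + d) x)) = real_of_int (ex (take m x)) + real_of_int (ex (take d (drop m x)))"
        by (simp add: ex_take_drop)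
      moreover have "\<bar>real_of_int (ex (take (m + d) x))\<bar> < t" "\<bar>real_of_int (ex (take m x))\<bar> < t"
        using bx True by auto
      ultimately show ?thesis using \<open>0 \<le> a\<close> \<open>0 \<le> t\<close> unfolding tz by linarith
    next
      case False2: False
      have tz: "take d (drop m z) = drop m x @ take (d - (l - m)) y" using xy lx False False2 by simp
      have ez: "real_of_int (ex (take d (drop m z))) = real_of_int (ex (drop m x)) + real_of_int (ex (take (d - (l - m)) y))"
        unfolding tz by simp
      have "a * real ((d - (l - m)) div Lm) - a - t \<le> real_of_int (ex (take (d - (l - m)) y))"
        using Zs_prefix[OF xy(3)] Cons.prems xy lx False2 by auto
      moreover have "real_of_int (ex x) = real_of_int (ex (take m x)) + real_of_int (ex (drop m x))" by (metis append_take_drop_id ex_append of_int_add)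
      moreover have "a \<le> real_of_int (ex x)" using xy by (auto simp: Seg_def)
      moreover have "\<bar>real_of_int (ex (take m x))\<bar> < t" using bx False by auto
      moreover have "d div Lm \<le> (d - (l - m)) div Lm + 1"
      proof -
        have "d \<le> (d - (l - m)) + Lm" using lx by simp
        then have "d div Lm \<le> ((d - (l - m)) + Lm) div Lm" by (rule div_le_mono)
        also have "\<dots> = (d - (l - m)) div Lm + 1" using \<open>Lm > 0\<close> by simp
        finally show ?thesis .
      qed
      then have "a * real (d div Lm) \<le> a * real ((d - (l - m)) div Lm) + a"
        by (rule amul[OF \<open>0 \<le> a\<close>])
      ultimately show ?thesis unfolding ez using \<open>0 \<le> a\<close> \<open>0 \<le> t\<close> by linarith
    qed
  qed
qed


lemma ex_take_ge: "- int d \<le> ex (take d xs)"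
  using ex_ge[of "take d xs"] by simp

lemma ex_infix_left:
  assumes "m + d \<le> length (x @ v)"
  shows "\<exists>m' d'. m' + d' \<le> length v \<and> d \<le> d' + length x \<and>
     ex (take d' (drop m' v)) - int (length x) \<le> ex (take d (drop m (x @ v)))"
proof (cases "length x \<le> m")
  case True
  then have "drop m (x @ v) = drop (m - length x) v" by simp
  then show ?thesis using assms True by (intro exI[of _ "m - length x"] exI[of _ d]) auto
next
  case False
  then have "take d (drop m (x @ v)) = take d (drop m x) @ take (d - (length x - m)) v" by simp
  moreover have "- int (length x) \<le> ex (take d (drop m x))"
    using ex_ge[of "take d (drop m x)"] by simp
  ultimately show ?thesis using assms False
    by (intro exI[of _ 0] exI[of _ "d - (length x - m)"]) auto
qed

lemma ex_infix_right:
  assumes "m + d \<le> length (v @ w)"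
  shows "\<exists>m' d'. m' + d' \<le> length v \<and> d \<le> d' + length w \<and>
     ex (take d' (drop m' v)) - int (length w) \<le> ex (take d (drop m (v @ w)))"
proof (cases "length v \<le> m")
  case True
  then have "drop m (v @ w) = drop (m - length v) w" by simp
  moreover have "- int (length w) \<le> ex (take d (drop (m - length v) w))"
    using ex_ge[of "take d (drop (m - length v) w)"] by simp
  ultimately show ?thesis using assms True by (intro exI[of _ "length v"] exI[of _ 0]) auto
next
  case False
  define d' where "d' = min d (length v - m)"
  have "take d (drop m (v @ w)) = take d' (drop m v) @ take (d - (length v - m)) w"
    using False by (simp add: d'_def min_def)
  moreover have "- int (length w) \<le> ex (take (d - (length v - m)) w)"
    using ex_ge[of "take (d - (length v - m)) w"] by simp
  ultimately show ?thesis using assms False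
    by (intro exI[of _ m] exI[of _ d']) (auto simp: d'_def)
qed

lemma ex_infix3:
  assumes "m + d \<le> length (x @ v @ w)"
  shows "\<exists>m' d'. m' + d' \<le> length v \<and> d \<le> d' + length x + length w \<and>
     ex (take d' (drop m' v)) - int (length x) - int (length w) \<le> ex (take d (drop m (x @ v @ w)))"
proof -
  obtain m1 d1 where 1: "m1 + d1 \<le> length (v @ w)" "d \<le> d1 + length x"
     "ex (take d1 (drop m1 (v @ w))) - int (length x) \<le> ex (take d (drop m (x @ v @ w)))"
    using ex_infix_left[OF assms] by blast
  obtain m2 d2 where 2: "m2 + d2 \<le> length v" "d1 \<le> d2 + length w"
     "ex (take d2 (drop m2 v)) - int (length w) \<le> ex (take d1 (drop m1 (v @ w)))"
    using ex_infix_right[OF 1(1)] by blast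
  show ?thesis using 1 2 by (intro exI[of _ m2] exI[of _ d2]) auto
qed

definition noF :: "nat \<Rightarrow> bool list \<Rightarrow> bool" where
  "noF k z \<longleftrightarrow> (\<forall>i. i + k \<le> length z \<longrightarrow> take k (drop i z) \<noteq> replicate k False)"

lemma noF_snoc:
  assumes "noF k z" "k \<ge> 1"
  shows "noF k (z @ [True])"
  unfolding noF_def
proof (intro allI impI)
  fix i assume i: "i + k \<le> length (z @ [True])"
  show "take k (drop i (z @ [True])) \<noteq> replicate k False"
  proof (cases "i + k \<le> length z")
    case True
    then have "take k (drop i (z @ [True])) = take k (drop i z)" by simp
    then show ?thesis using assms True by (simp add: noF_def)
  next
    case False
    then have "i + k = length z + 1" using i by simp
    then have "take k (drop i (z @ [True])) = drop i z @ [True]" using assms(2) by simp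
    then have "True \<in> set (take k (drop i (z @ [True])))" by simp
    then show ?thesis by (metis (full_types) in_set_replicate)
  qed
qed

lemma mu_bool:
  assumes ua: "ua = replicate k False @ True # ya" and ub: "ub = replicate k False @ True # yb"
    and len: "length ua = n" "length ub = n"
    and nf: "noF k yb" and yb: "yb \<noteq> []" "last yb = True"
    and l: "1 \<le> l" "l < n"
  shows "take l ua \<noteq> drop (n - l) ub"
proof
  assume eq: "take l ua = drop (n - l) ub"
  show False
  proof (cases "l \<le> k")
    case True
    then have "take l ua = replicate l False" using ua by simp
    moreover have "last (drop (n - l) ub) = True" using l len ub yb by (simp add: last_drop)
    moreover have "drop (n - l) ub \<noteq> []" using l len by simp
    ultimately show False using eq l by (metis last_replicate not_one_le_zero)
  next
    case False
    have "take k (take l ua) = replicate k False" using False ua by (simp add: min_def)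
    then have tk: "take k (drop (n - l) ub) = replicate k False" using eq by simp
    define j where "j = n - l"
    have j: "1 \<le> j" "j < n - k" "length yb = n - k - 1" using l False len ub by (auto simp: j_def)
    show False
    proof (cases "k + 1 \<le> j")
      case True
      then have "j - k = Suc (j - k - 1)" by simp
      then have "drop j ub = drop (j - k - 1) yb" using ub by simp
      moreover have "(j - k - 1) + k \<le> length yb" using j True by simp
      ultimately show False using nf tk by (simp add: noF_def j_def)
    next
      case False
      then have "drop j ub = replicate (k - j) False @ True # yb" using ub by simp
      then have "take k (drop j ub) ! (k - j) = True" using j False by (simp add: nth_append)
      moreover have "k - j < k" using j False by simp
      ultimately show False using tk by (simp add: j_def)
    qed
  qed
qed

lemma card_notF:
  assumes "k \<le> N"
  shows "card {z\<in>Lists N. \<not> noF k z} \<le> (N + 1) * 2 ^ (N - k)"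
proof -
  define A where "A i = {z\<in>Lists N. take k (drop i z) = replicate k False}" for i
  have sub: "{z\<in>Lists N. \<not> noF k z} \<subseteq> (\<Union>i\<in>{0..N-k}. A i)"
  proof
    fix z assume "z \<in> {z\<in>Lists N. \<not> noF k z}"
    then obtain i where "i + k \<le> N" "take k (drop i z) = replicate k False" "z \<in> Lists N"
      by (auto simp: noF_def Lists_def)
    then show "z \<in> (\<Union>i\<in>{0..N-k}. A i)" by (auto simp: A_def intro!: bexI[of _ i])
  qed
  have cA: "card (A i) \<le> 2 ^ (N - k)" if "i \<le> N - k" for i
  proof -
    have "inj_on (\<lambda>z. (take i z, drop (i + k) z)) (A i)"
    proof (rule inj_onI)
      fix z z' assume z: "z \<in> A i" "z' \<in> A i" "(take i z, drop (i + k) z) = (take i z', drop (i + k) z')"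
      have dec: "y = take i y @ take k (drop i y) @ drop (i + k) y" for y :: "bool list"
        by (metis append_take_drop_id drop_drop add.commute)
      show "z = z'" using dec[of z] dec[of z'] z by (simp add: A_def)
    qed
    moreover have "(\<lambda>z. (take i z, drop (i + k) z)) ` A i \<subseteq> Lists i \<times> Lists (N - i - k)"
      using that assms by (auto simp: A_def Lists_def)
    ultimately have "card (A i) \<le> card (Lists i \<times> Lists (N - i - k))"
      by (metis card_inj_on_le finite_Lists finite_SigmaI)
    also have "\<dots> = 2 ^ i * 2 ^ (N - i - k)" by (simp add: card_cartesian_product card_Lists)
    also have "\<dots> = 2 ^ (N - k)" using that by (simp add: power_add[symmetric])
    finally show ?thesis .
  qed
  have "card {z\<in>Lists N. \<not> noF k z} \<le> card (\<Union>i\<in>{0..N-k}. A i)"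
    by (rule card_mono[OF _ sub]) (simp add: A_def)
  also have "\<dots> \<le> (\<Sum>i\<in>{0..N-k}. card (A i))" by (rule card_UN_le) simp
  also have "\<dots> \<le> (\<Sum>i\<in>{0..N-k}. 2 ^ (N - k))" by (rule sum_mono) (use cA in auto)
  also have "\<dots> = (N - k + 1) * 2 ^ (N - k)" by simp
  also have "\<dots> \<le> (N + 1) * 2 ^ (N - k)" by simp
  finally show ?thesis .
qed


definition isGC :: "nuc \<Rightarrow> bool" where "isGC x \<longleftrightarrow> x = G \<or> x = C"
definition isU :: "nuc \<Rightarrow> bool" where "isU x \<longleftrightarrow> x = A \<or> x = C"
definition enc :: "bool \<Rightarrow> bool \<Rightarrow> nuc" where
  "enc g u = (if g then (if u then C else G) else (if u then A else T))"

lemma isGC_enc[simp]: "isGC (enc g u) = g" by (simp add: enc_def isGC_def)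
lemma isU_enc[simp]: "isU (enc g u) = u" by (simp add: enc_def isU_def)
lemma enc_dec: "enc (isGC x) (isU x) = x" by (cases x) (simp_all add: enc_def isGC_def isU_def)
lemma isU_compl[simp]: "isU (compl x) = (\<not> isU x)" by (cases x) (simp_all add: isU_def)

definition encl :: "bool list \<Rightarrow> bool list \<Rightarrow> nuc list" where
  "encl gs us = map (\<lambda>(g, u). enc g u) (zip gs us)"

lemma length_encl[simp]: "length gs = length us \<Longrightarrow> length (encl gs us) = length gs"
  by (simp add: encl_def)
lemma map_isGC_encl[simp]: "length gs = length us \<Longrightarrow> map isGC (encl gs us) = gs"
  by (induct gs us rule: list_induct2) (auto simp: encl_def)
lemma map_isU_encl[simp]: "length gs = length us \<Longrightarrow> map isU (encl gs us) = us"
  by (induct gs us rule: list_induct2) (auto simp: encl_def)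
lemma filter_isGC_encl[simp]: "length gs = length us \<Longrightarrow> length (filter isGC (encl gs us)) = length (filter (\<lambda>b. b) gs)"
proof -
  assume "length gs = length us"
  then have "length (filter (\<lambda>b. b) (map isGC (encl gs us))) = length (filter (\<lambda>b. b) gs)" by simp
  then show ?thesis by (simp add: filter_map comp_def)
qed
lemma encl_dec: "encl (map isGC w) (map isU w) = w"
  by (induct w) (simp_all add: encl_def enc_dec)

lemma balanced_iff: "balanced w \<longleftrightarrow> 2 * length (filter isGC w) = length w"
proof -
  have "isGC = (\<lambda>x. x = G \<or> x = C)" by (rule ext) (simp add: isGC_def)
  then show ?thesis unfolding balanced_def by simp
qed
lemma comp_isGC[simp]: "(\<lambda>b. b) \<circ> isGC = isGC" by (rule ext) simp
lemma filt_map[simp]: "length (filter (\<lambda>b. b) (map isGC w)) = length (filter isGC w)"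
  by (induct w) auto

lemma card_count: "card {g\<in>Lists n. length (filter (\<lambda>b. b) g) = m} = n choose m"
proof (induct n arbitrary: m)
  case 0
  have h: "{g\<in>Lists 0. length (filter (\<lambda>b. b) g) = m} = (if m = 0 then {[]} else {})" by (auto simp: Lists_def)
  show ?case by (simp only: h) (cases m, simp_all)
next
  case (Suc n)
  note IH = Suc.hyps
  show ?case
  proof (cases m)
    case 0
    have "{g\<in>Lists (Suc n). length (filter (\<lambda>b. b) g) = m} = {replicate (Suc n) False}"
    proof (intro equalityI subsetI)
      fix g assume "g \<in> {g\<in>Lists (Suc n). length (filter (\<lambda>b. b) g) = m}"
      then have "length g = Suc n" "\<forall>x\<in>set g. \<not> x" using 0 by (auto simp: Lists_def filter_empty_conv)
      then have "g = replicate (Suc n) False" by (metis (full_types) replicate_eqI)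
      then show "g \<in> {replicate (Suc n) False}" by simp
    next
      fix g assume "g \<in> {replicate (Suc n) False}"
      then show "g \<in> {g\<in>Lists (Suc n). length (filter (\<lambda>b. b) g) = m}" using 0 by (simp add: Lists_def)
    qed
    note h = this
    show ?thesis unfolding h using 0 by simp
  next
    case (Suc m')
    have e: "{g\<in>Lists (Suc n). length (filter (\<lambda>b. b) g) = m} =
      Cons True ` {g\<in>Lists n. length (filter (\<lambda>b. b) g) = m'} \<union> Cons False ` {g\<in>Lists n. length (filter (\<lambda>b. b) g) = m}"
    proof
      show "{g\<in>Lists (Suc n). length (filter (\<lambda>b. b) g) = m} \<subseteq>
        Cons True ` {g\<in>Lists n. length (filter (\<lambda>b. b) g) = m'} \<union> Cons False ` {g\<in>Lists n. length (filter (\<lambda>b. b) g) = m}"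
      proof
        fix g assume "g \<in> {g\<in>Lists (Suc n). length (filter (\<lambda>b. b) g) = m}"
        then obtain b h where "g = b # h" "length h = n" "length (filter (\<lambda>b. b) g) = m"
          by (auto simp: Lists_def length_Suc_conv)
        then show "g \<in> Cons True ` {g\<in>Lists n. length (filter (\<lambda>b. b) g) = m'} \<union> Cons False ` {g\<in>Lists n. length (filter (\<lambda>b. b) g) = m}"
          using Suc by (cases b) (simp_all add: Lists_def)
      qed
    next
      show "Cons True ` {g\<in>Lists n. length (filter (\<lambda>b. b) g) = m'} \<union> Cons False ` {g\<in>Lists n. length (filter (\<lambda>b. b) g) = m}
         \<subseteq> {g\<in>Lists (Suc n). length (filter (\<lambda>b. b) g) = m}"
        using Suc by (auto simp: Lists_def)
    qed
    have "card {g\<in>Lists (Suc n). length (filter (\<lambda>b. b) g) = m} =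
      card {g\<in>Lists n. length (filter (\<lambda>b. b) g) = m'} + card {g\<in>Lists n. length (filter (\<lambda>b. b) g) = m}"
      unfolding e
    proof (subst card_Un_disjoint)
      show "finite (Cons True ` {g\<in>Lists n. length (filter (\<lambda>b. b) g) = m'})" by simp
      show "finite (Cons False ` {g\<in>Lists n. length (filter (\<lambda>b. b) g) = m})" by simp
      show "Cons True ` {g\<in>Lists n. length (filter (\<lambda>b. b) g) = m'} \<inter> Cons False ` {g\<in>Lists n. length (filter (\<lambda>b. b) g) = m} = {}" by blast
    qed (simp add: card_image)
    then show ?thesis using IH Suc by simp
  qed
qed

definition Gb :: "nat \<Rightarrow> bool list set" where "Gb n = {g\<in>Lists n. 2 * length (filter (\<lambda>b. b) g) = n}"

lemma card_Gb: "even n \<Longrightarrow> card (Gb n) = n choose (n div 2)"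
proof -
  assume "even n"
  then have "Gb n = {g\<in>Lists n. length (filter (\<lambda>b. b) g) = n div 2}" by (auto simp: Gb_def)
  then show ?thesis by (simp add: card_count)
qed

lemma finite_Gb[simp]: "finite (Gb n)" by (simp add: Gb_def)

definition Bw :: "nat \<Rightarrow> nuc list set" where "Bw n = {w. length w = n \<and> balanced w}"

lemma inj_encl: "inj_on (\<lambda>(g, u). encl g u) (Lists n \<times> Lists n)"
proof (rule inj_onI)
  fix x y assume xy: "x \<in> Lists n \<times> Lists n" "y \<in> Lists n \<times> Lists n" "(\<lambda>(g, u). encl g u) x = (\<lambda>(g, u). encl g u) y"
  obtain g u g' u' where "x = (g, u)" "y = (g', u')" by (cases x, cases y) auto
  with xy have "encl g u = encl g' u'" "length g = n" "length u = n" "length g' = n" "length u' = n"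
    by (auto simp: Lists_def)
  then have "map isGC (encl g u) = map isGC (encl g' u')" "map isU (encl g u) = map isU (encl g' u')" by simp_all
  then show "x = y" using \<open>x = (g, u)\<close> \<open>y = (g', u')\<close> \<open>length g = n\<close> \<open>length u = n\<close> \<open>length g' = n\<close> \<open>length u' = n\<close>
    by simp
qed

lemma Bw_eq: "Bw n = (\<lambda>(g, u). encl g u) ` (Gb n \<times> Lists n)"
proof
  show "Bw n \<subseteq> (\<lambda>(g, u). encl g u) ` (Gb n \<times> Lists n)"
  proof
    fix w assume "w \<in> Bw n"
    then have "(map isGC w, map isU w) \<in> Gb n \<times> Lists n" "w = encl (map isGC w) (map isU w)"
      by (auto simp: Bw_def Gb_def Lists_def balanced_iff encl_dec)
    then show "w \<in> (\<lambda>(g, u). encl g u) ` (Gb n \<times> Lists n)" by force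
  qed
next
  show "(\<lambda>(g, u). encl g u) ` (Gb n \<times> Lists n) \<subseteq> Bw n"
    by (auto simp: Bw_def Gb_def Lists_def balanced_iff)
qed

lemma card_Bw: "even n \<Longrightarrow> card (Bw n) = (n choose (n div 2)) * 2 ^ n"
proof -
  assume "even n"
  have "inj_on (\<lambda>(g, u). encl g u) (Gb n \<times> Lists n)"
    by (rule inj_on_subset[OF inj_encl[of n]]) (auto simp: Gb_def)
  then show ?thesis unfolding Bw_eq
    by (simp add: card_image card_cartesian_product card_Gb[OF \<open>even n\<close>] card_Lists)
qed

lemma finite_Bw[simp]: "finite (Bw n)" unfolding Bw_eq by simp

lemma filter_rotate_len: "length (filter P (rotate r w)) = length (filter P w)"
proof -
  define j where "j = r mod length w"
  have "rotate r w = drop j w @ take j w" by (simp add: rotate_drop_take j_def)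
  then have "length (filter P (rotate r w)) = length (filter P (drop j w)) + length (filter P (take j w))" by simp
  also have "\<dots> = length (filter P (take j w @ drop j w))" by (simp only: filter_append length_append add.commute)
  also have "take j w @ drop j w = w" by (rule append_take_drop_id)
  finally show ?thesis .
qed

lemma balanced_rotate: "balanced (rotate r w) = balanced w"
  by (simp add: balanced_def filter_rotate_len)

lemma rot_eq:
  assumes "MU n K" "a \<in> K" "b \<in> K" "length a = n" "length b = n" "r \<le> r'" "r' < n"
    "rotate r a = rotate r' b"
  shows "a = b \<and> r = r'"
proof -
  have "rotate (n - r) (rotate r a) = rotate (n - r) (rotate r' b)" using assms by simp
  then have "rotate (n - r + r) a = rotate (n - r + r') b" by (simp add: rotate_rotate)
  moreover have "rotate (n - r + r) a = a" using assms by simp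
  moreover have "rotate (n - r + r') b = rotate (r' - r) b"
  proof -
    have "n - r + r' = (r' - r) + n" using assms by simp
    then have e1: "(n - r + r') mod n = r' - r" using assms by (simp only: mod_add_self2) simp
    have e2: "(r' - r) mod n = r' - r" using assms by simp
    have "rotate (n - r + r') b = rotate ((n - r + r') mod length b) b" by (rule rotate_conv_mod)
    also have "\<dots> = rotate ((r' - r) mod length b) b" using e1 e2 assms by simp
    also have "\<dots> = rotate (r' - r) b" by (rule rotate_conv_mod[symmetric])
    finally show ?thesis .
  qed
  ultimately have ab: "a = rotate (r' - r) b" by simp
  show ?thesis
  proof (cases "r' - r = 0")
    case True then show ?thesis using ab assms by simp
  next
    case False
    define d where "d = r' - r"
    have d: "0 < d" "d < n" using False assms by (auto simp: d_def)
    have "a = drop d b @ take d b" using ab d assms by (simp add: rotate_drop_take d_def)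
    then have "take (n - d) a = drop d b" using d assms by simp
    moreover have "take (n - d) a \<noteq> drop (n - (n - d)) b"
    proof -
      have "1 \<le> n - d" "n - d < n" using d by auto
      then show ?thesis using assms(1-3) unfolding MU_def by blast
    qed
    ultimately show ?thesis using d by simp
  qed
qed

lemma upper:
  assumes "K \<subseteq> {w. length w = n}" "balanced_code K" "MU n K" "even n"
  shows "card K * n \<le> (n choose (n div 2)) * 2 ^ n"
proof -
  define phi :: "nuc list \<times> nat \<Rightarrow> nuc list" where "phi = (\<lambda>(w, r). rotate r w)"
  have inj: "inj_on phi (K \<times> {0..<n})"
  proof (rule inj_onI)
    fix x y assume xy: "x \<in> K \<times> {0..<n}" "y \<in> K \<times> {0..<n}" "phi x = phi y"
    obtain a r b r' where xe: "x = (a, r)" "y = (b, r')" by (cases x, cases y) auto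
    have la: "length a = n" "length b = n" using xy xe assms(1) by auto
    show "x = y"
    proof (cases "r \<le> r'")
      case True
      then show ?thesis using rot_eq[OF assms(3), of a b r r'] xy xe la by (auto simp: phi_def)
    next
      case False
      then show ?thesis using rot_eq[OF assms(3), of b a r' r] xy xe la by (auto simp: phi_def)
    qed
  qed
  moreover have "phi ` (K \<times> {0..<n}) \<subseteq> Bw n"
    using assms(1,2) by (auto simp: phi_def Bw_def balanced_code_def balanced_rotate)
  ultimately have "card (K \<times> {0..<n}) \<le> card (Bw n)" by (metis card_inj_on_le finite_Bw)
  then show ?thesis by (simp add: card_cartesian_product card_Bw[OF assms(4)])
qed


definition hdr :: "nat \<Rightarrow> bool list" where "hdr k = replicate k False @ [True]"

definition Uset :: "nat \<Rightarrow> real \<Rightarrow> real \<Rightarrow> nat list \<Rightarrow> bool list set" where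
  "Uset k a t ls = (\<lambda>z. hdr k @ z @ [True]) ` {z\<in>Zs a t ls. noF k z}"

definition Code :: "nat \<Rightarrow> nat \<Rightarrow> real \<Rightarrow> real \<Rightarrow> nat list \<Rightarrow> nuc list set" where
  "Code n k a t ls = (\<lambda>(g, u). encl g u) ` (Gb n \<times> Uset k a t ls)"

lemma Uset_len: "u \<in> Uset k a t ls \<Longrightarrow> length u = k + 2 + sum_list ls"
  by (auto simp: Uset_def hdr_def Zs_length)

lemma card_Uset: "card (Uset k a t ls) = card {z\<in>Zs a t ls. noF k z}"
  unfolding Uset_def by (rule card_image) (auto simp: inj_on_def)

lemma card_Code:
  assumes "n = k + 2 + sum_list ls"
  shows "card (Code n k a t ls) = card (Gb n) * card (Uset k a t ls)"
proof -
  have "inj_on (\<lambda>(g, u). encl g u) (Gb n \<times> Uset k a t ls)"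
    by (rule inj_on_subset[OF inj_encl[of n]]) (auto simp: Gb_def Lists_def assms dest: Uset_len)
  then show ?thesis unfolding Code_def by (simp add: card_image card_cartesian_product)
qed

lemma Uset_window:
  assumes u: "u \<in> Uset k a t ls" and ls: "\<forall>l\<in>set ls. l \<le> Lm" "Lm > 0" "0 \<le> a" "0 \<le> t"
    and W: "\<And>d. f \<le> d + (k + 2) \<Longrightarrow> 0 < a * real (d div Lm) - 2 * a - 3 * t - real (k + 2)"
    and m: "m + f \<le> length u"
  shows "0 < ex (take f (drop m u))"
proof -
  obtain z where z: "u = hdr k @ z @ [True]" "z \<in> Zs a t ls" using u by (auto simp: Uset_def)
  obtain m' d' where md: "m' + d' \<le> length z" "f \<le> d' + length (hdr k) + length [True]"
     "ex (take d' (drop m' z)) - int (length (hdr k)) - int (length [True]) \<le> ex (take f (drop m u))"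
    using ex_infix3[of m f "hdr k" z "[True]"] m z by auto
  have "a * real (d' div Lm) - 2 * a - 3 * t \<le> real_of_int (ex (take d' (drop m' z)))"
    using Zs_infix[OF z(2) ls md(1)] .
  moreover have "f \<le> d' + (k + 2)" using md(2) by (simp add: hdr_def)
  then have "0 < a * real (d' div Lm) - 2 * a - 3 * t - real (k + 2)" by (rule W)
  moreover have "real_of_int (ex (take d' (drop m' z))) - real (k + 2) \<le> real_of_int (ex (take f (drop m u)))"
    using md(3) by (simp add: hdr_def)
  ultimately show ?thesis by linarith
qed

lemma ex_isU_compl: "ex (map isU (map compl w)) = - ex (map isU w)"
  by (induct w) auto

lemma Code_props:
  assumes n: "n = k + 2 + sum_list ls" and k: "k \<ge> 1"
    and ls: "\<forall>l\<in>set ls. l \<le> Lm" "Lm > 0" "0 \<le> a" "0 \<le> t"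
    and W: "\<And>d. f \<le> d + (k + 2) \<Longrightarrow> 0 < a * real (d div Lm) - 2 * a - 3 * t - real (k + 2)"
  shows "Code n k a t ls \<subseteq> {w. length w = n}" "balanced_code (Code n k a t ls)"
    "MU n (Code n k a t ls)" "APD f n (Code n k a t ls)"
proof -
  have mem: "\<exists>g u. w = encl g u \<and> g \<in> Gb n \<and> u \<in> Uset k a t ls \<and> length g = n \<and> length u = n
      \<and> map isU w = u" if wC: "w \<in> Code n k a t ls" for w
  proof -
    obtain pr where pr: "pr \<in> Gb n \<times> Uset k a t ls" "w = (\<lambda>(g, u). encl g u) pr"
      using wC unfolding Code_def by blast
    obtain g u where "w = encl g u" "g \<in> Gb n" "u \<in> Uset k a t ls" using pr by (cases pr) auto
    moreover have "length g = n" "length u = n" using calculation n by (auto simp: Gb_def Lists_def Uset_len)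
    ultimately show ?thesis by auto
  qed
  show "Code n k a t ls \<subseteq> {w. length w = n}" using mem by force
  show "balanced_code (Code n k a t ls)"
    unfolding balanced_code_def
  proof
    fix w assume "w \<in> Code n k a t ls"
    then obtain g u where "w = encl g u" "g \<in> Gb n" "length g = n" "length u = n" using mem by blast
    then show "balanced w" by (simp add: balanced_iff Gb_def)
  qed
  show "MU n (Code n k a t ls)"
    unfolding MU_def
  proof (intro ballI allI impI)
    fix wa wb l assume wa: "wa \<in> Code n k a t ls" and wb: "wb \<in> Code n k a t ls" and l: "1 \<le> l \<and> l < n"
    obtain ga ua where A: "wa = encl ga ua" "ua \<in> Uset k a t ls" "length ua = n" "map isU wa = ua" using mem[OF wa] by blast
    obtain gb ub where B: "wb = encl gb ub" "ub \<in> Uset k a t ls" "length ub = n" "map isU wb = ub" using mem[OF wb] by blast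
    obtain za where za: "ua = replicate k False @ True # (za @ [True])" using A(2) by (auto simp: Uset_def hdr_def)
    obtain zb where zb: "ub = replicate k False @ True # (zb @ [True])" "noF k zb"
      using B(2) by (auto simp: Uset_def hdr_def)
    have "take l ua \<noteq> drop (n - l) ub"
      by (rule mu_bool[OF za zb(1) A(3) B(3) noF_snoc[OF zb(2) k]]) (use l in auto)
    then show "take l wa \<noteq> drop (n - l) wb"
      using A(4) B(4) by (metis take_map drop_map)
  qed
  show "APD f n (Code n k a t ls)"
    unfolding APD_def
  proof (intro ballI allI impI)
    fix wa wb i j assume wa: "wa \<in> Code n k a t ls" and wb: "wb \<in> Code n k a t ls"
      and ij: "1 \<le> i \<and> i \<le> n + 1 - f \<and> 1 \<le> j \<and> j \<le> n + 1 - f"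
    obtain ua where A: "ua \<in> Uset k a t ls" "length ua = n" "map isU wa = ua" using mem[OF wa] by blast
    obtain ub where B: "ub \<in> Uset k a t ls" "length ub = n" "map isU wb = ub" using mem[OF wb] by blast
    have pa: "0 < ex (take f (drop (i - 1) ua))"
      by (rule Uset_window[OF A(1) ls W]) (use ij A(2) in auto)
    have pb: "0 < ex (take f (drop (j - 1) ub))"
      by (rule Uset_window[OF B(1) ls W]) (use ij B(2) in auto)
    have ea: "ex (map isU (map compl (window wa i f))) = - ex (take f (drop (i - 1) ua))"
    proof -
      have "map isU (window wa i f) = take f (drop (i - 1) ua)" unfolding window_def A(3)[symmetric] by (simp add: take_map drop_map)
      then show ?thesis using ex_isU_compl[of "window wa i f"] by simp
    qed
    have eb: "ex (map isU (window wb j f)) = ex (take f (drop (j - 1) ub))"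
      unfolding window_def B(3)[symmetric] by (simp add: take_map drop_map)
    have eb': "ex (map isU (rev (window wb j f))) = ex (take f (drop (j - 1) ub))"
      using eb by (simp add: rev_map[symmetric])
    show "map compl (window wa i f) \<noteq> window wb j f \<and> map compl (window wa i f) \<noteq> rev (window wb j f)"
      using ea eb eb' pa pb by (metis less_asym neg_less_0_iff_less)
  qed
qed


lemma UNIV_nuc: "(UNIV :: nuc set) = {A, T, C, G}"
  using nuc.exhaust by auto

lemma finite_words: "finite {w :: nuc list. length w = n}"
proof -
  have "{w :: nuc list. length w = n} = {w. set w \<subseteq> UNIV \<and> length w = n}" by auto
  then show ?thesis using finite_lists_length_eq[of "UNIV :: nuc set" n] by (simp add: UNIV_nuc)
qed

definition Sset :: "nat \<Rightarrow> nat \<Rightarrow> nat set" where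
  "Sset f n = {card K | K. K \<subseteq> {w. length w = n} \<and> APD f n K \<and> balanced_code K \<and> MU n K}"

lemma Sset_finite: "finite (Sset f n)"
proof -
  have "Sset f n \<subseteq> {..card {w :: nuc list. length w = n}}"
    unfolding Sset_def using card_mono[OF finite_words] by auto
  then show ?thesis by (rule finite_subset) simp
qed

lemma Sset_ne: "Sset f n \<noteq> {}"
proof -
  have "card {} \<in> Sset f n" unfolding Sset_def
    by (rule CollectI, rule exI[of _ "{}"]) (simp add: APD_def balanced_code_def MU_def)
  then show ?thesis by blast
qed

lemma Amax_ge:
  assumes "K \<subseteq> {w. length w = n}" "APD f n K" "balanced_code K" "MU n K"
  shows "card K \<le> A_max f n"
proof -
  have "card K \<in> Sset f n" unfolding Sset_def using assms by blast
  then show ?thesis unfolding A_max_def Sset_def[symmetric] using Sset_finite by simp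
qed

lemma Amax_le:
  assumes "even n"
  shows "A_max f n * n \<le> (n choose (n div 2)) * 2 ^ n"
proof -
  have "A_max f n \<in> Sset f n" unfolding A_max_def Sset_def[symmetric]
    using Sset_finite Sset_ne by (rule Max_in)
  then obtain K where "A_max f n = card K" "K \<subseteq> {w. length w = n}" "APD f n K" "balanced_code K" "MU n K"
    unfolding Sset_def by blast
  then show ?thesis using upper[of K n] assms by simp
qed


lemma lower_bound:
  fixes p f :: nat
  defines "n \<equiv> p * f" and "s \<equiv> 200 * p" and "c0 \<equiv> 6 * (200 * p) + 2"
  defines "k \<equiv> floor_log (p * f) + c0" and "D \<equiv> floor_log (p * f) + c0 + 2"
  assumes p: "p > 0" and fe: "even f" and H: "2 * s * (s + 1) * D ^ 2 \<le> f"
  shows "1 / (8 * 2 ^ c0 * 48 ^ s) * (real (n choose (n div 2)) * 2 ^ n / real n) \<le> real (A_max f n)"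
proof -
  define N where "N = n - D"
  define L where "L = N div s"
  define r where "r = N - (s - 1) * L"
  define ls where "ls = replicate (s - 1) L @ [r]"
  define a where "a = sqrt (real L / 2)"
  define t where "t = sqrt (96 * real L)"
  have Dk: "D = k + 2" by (simp add: D_def k_def)
  have s200: "s \<ge> 200" using p by (simp add: s_def)
  have D2: "D \<ge> 2" by (simp add: D_def)
  have "2 * s * 1 \<le> 2 * s * (s + 1)" by (rule mult_le_mono2) simp
  then have "100 \<le> 2 * s * (s + 1)" using s200 by linarith
  moreover have "D \<le> D ^ 2" using D2 by (simp add: power2_eq_square)
  ultimately have "100 * D \<le> 2 * s * (s + 1) * D ^ 2" by (rule mult_le_mono)
  then have h1: "100 * D \<le> f" using H by linarith
  have h2: "f \<le> n" using p by (simp add: n_def)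
  have n0: "n > 0" using h1 h2 D2 by linarith
  have h3: "f \<le> 2 * N" using h1 h2 by (simp add: N_def)
  have h4a: "s * L \<le> N" by (simp add: L_def)
  have h4b: "N < s * L + s"
  proof -
    have "s * L + N mod s = N" unfolding L_def by (metis div_mult_mod_eq mult.commute)
    moreover have "N mod s < s" using s200 by simp
    ultimately show ?thesis by linarith
  qed
  have "(2 * s) * ((s + 1) * D ^ 2) = 2 * s * (s + 1) * D ^ 2" by (simp only: mult.assoc)
  also have "\<dots> \<le> f" by (rule H)
  also have "f \<le> 2 * N" by (rule h3)
  also have "2 * N < 2 * (s * L + s)" using h4b by simp
  also have "\<dots> = (2 * s) * (L + 1)" by (simp add: algebra_simps)
  finally have "(2 * s) * ((s + 1) * D ^ 2) < (2 * s) * (L + 1)" .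
  then have "(s + 1) * D ^ 2 < L + 1" by (simp only: mult_less_cancel1)
  then have h5: "(s + 1) * D ^ 2 \<le> L" by simp
  have "2 * 2 \<le> D * D" using D2 by (rule mult_le_mono) (use D2 in simp)
  then have D4: "D ^ 2 \<ge> 4" by (simp add: power2_eq_square)
  have "(s + 1) * 1 \<le> (s + 1) * D ^ 2" using D4 by (intro mult_le_mono2) simp
  then have h5b: "s + 1 \<le> L" using h5 by (metis mult_1_right le_trans)
  have "1 * D ^ 2 < (s + 1) * D ^ 2" using D4 s200 D2 by (intro mult_less_mono1) auto
  then have h5c: "D ^ 2 < L" using h5 by (metis mult_1 less_le_trans)
  have Lpos: "L > 0" using h5b by simp
  have h6: "r = L + (N - s * L)" using s200 h4a by (simp add: r_def algebra_simps diff_mult_distrib)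
  have h6b: "L \<le> r" "r \<le> 2 * L" using h6 h4b h5b by auto
  have "(s - 1) * L \<le> s * L" by (rule mult_le_mono1) simp
  then have sL: "(s - 1) * L \<le> N" using h4a by linarith
  have "sum_list ls = (s - 1) * L + r" by (simp add: ls_def sum_list_replicate)
  then have h7: "sum_list ls = N" using sL by (simp add: r_def)
  have lsl: "length ls = s" using s200 by (simp add: ls_def)
  have lsset: "set ls \<subseteq> {L, r}" by (auto simp: ls_def)
  have "s * L \<le> p * f" using h4a by (simp add: N_def n_def)
  then have "p * (200 * L) \<le> p * f" by (simp add: s_def algebra_simps)
  then have h8: "200 * L \<le> f" using p by simp
  have h9: "196 * L + D \<le> f" using h8 h1 by linarith
  have nsum: "n = k + 2 + sum_list ls" using h7 h1 h2 by (simp add: N_def Dk)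
  have kN: "k \<le> N" using h1 h3 Dk by linarith
  have k1: "k \<ge> 1" by (simp add: k_def c0_def)
  have a0: "0 \<le> a" by (simp add: a_def)
  have t0: "0 < t" using Lpos by (simp add: t_def)
  have a2: "a ^ 2 = real L / 2" by (simp add: a_def)
  have t2: "t ^ 2 = 96 * real L" by (simp add: t_def)
  have at: "4 * t \<le> 96 * a"
  proof (rule power2_le_imp_le)
    show "(4 * t) ^ 2 \<le> (96 * a) ^ 2" by (simp add: power_mult_distrib a2 t2)
  qed (simp add: a0)
  have tD: "real D < t"
  proof (rule power_less_imp_less_base)
    have "real D ^ 2 < real L" using h5c by (metis of_nat_less_iff of_nat_power)
    then show "real D ^ 2 < t ^ 2" using t2 of_nat_0_le_iff[of L] by linarith
  qed (use t0 in simp)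
  have W: "0 < a * real (d div (2 * L)) - 2 * a - 3 * t - real (k + 2)" if "f \<le> d + (k + 2)" for d
  proof -
    have "98 * (2 * L) \<le> d" using that h9 Dk by linarith
    then have "98 * (2 * L) div (2 * L) \<le> d div (2 * L)" by (rule div_le_mono)
    then have "98 \<le> d div (2 * L)" using Lpos by simp
    then have m98: "a * 98 \<le> a * real (d div (2 * L))" using a0 by (intro mult_left_mono) auto
    have hD: "real (k + 2) = real D" using Dk by simp
    show ?thesis using at tD m98 hD a0 by linarith
  qed
  have lsb: "\<forall>l\<in>set ls. l \<le> 2 * L" using lsset h6b by auto
  have props: "Code n k a t ls \<subseteq> {w. length w = n}" "balanced_code (Code n k a t ls)"
    "MU n (Code n k a t ls)" "APD f n (Code n k a t ls)"
    using Code_props[OF nsum k1 lsb _ a0 _ W] Lpos t0 by auto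
  have AC: "card (Code n k a t ls) \<le> A_max f n" using Amax_ge props by blast
  have segc: "\<forall>l\<in>set ls. real (card (Seg a t l)) \<ge> 2 ^ l / 48"
  proof
    fix l assume "l \<in> set ls"
    then have l: "L \<le> l" "l \<le> 2 * L" using lsset h6b by auto
    show "real (card (Seg a t l)) \<ge> 2 ^ l / 48"
      by (rule seg_card) (use l Lpos a0 t0 a2 t2 in auto)
  qed
  have cZ: "real (card (Zs a t ls)) \<ge> 2 ^ N / 48 ^ s" using card_Zs_ge[OF segc] h7 lsl by simp
  have Zsub: "Zs a t ls \<subseteq> Lists N" using Zs_length h7 by (auto simp: Lists_def)
  have cbad: "card {z\<in>Lists N. \<not> noF k z} \<le> (N + 1) * 2 ^ (N - k)" by (rule card_notF[OF kN])
  have "card (Zs a t ls) \<le> card {z\<in>Zs a t ls. noF k z} + card {z\<in>Zs a t ls. \<not> noF k z}"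
  proof -
    have "Zs a t ls = {z\<in>Zs a t ls. noF k z} \<union> {z\<in>Zs a t ls. \<not> noF k z}" by auto
    then have "card (Zs a t ls) = card ({z\<in>Zs a t ls. noF k z} \<union> {z\<in>Zs a t ls. \<not> noF k z})"
      by (rule arg_cong)
    then show ?thesis using card_Un_le[of "{z\<in>Zs a t ls. noF k z}" "{z\<in>Zs a t ls. \<not> noF k z}"] by linarith
  qed
  moreover have "card {z\<in>Zs a t ls. \<not> noF k z} \<le> card {z\<in>Lists N. \<not> noF k z}"
    by (rule card_mono) (use Zsub in auto)
  ultimately have cgood0: "card (Zs a t ls) \<le> card {z\<in>Zs a t ls. noF k z} + (N + 1) * 2 ^ (N - k)"
    using cbad by linarith
  define fl where "fl = floor_log n"
  have kfl: "k = fl + c0" by (simp add: k_def fl_def n_def)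
  have nfl: "n < 2 * 2 ^ fl" using floor_log_exp2_gt[of n] by (simp add: fl_def)
  have fln: "2 ^ fl \<le> n" using floor_log_exp2_le[OF n0] by (simp add: fl_def)
  have c0e: "(2::nat) ^ c0 = 4 * 64 ^ s" by (simp add: c0_def s_def power_add power_mult)
  have "(48::nat) ^ s \<le> 64 ^ s" by (rule power_mono) auto
  have N1n: "N + 1 \<le> n" using D2 by (simp add: N_def) (use h1 h2 in linarith)
  have "2 * 48 ^ s * (N + 1) \<le> 2 * 64 ^ s * n" using \<open>48 ^ s \<le> 64 ^ s\<close> N1n by (intro mult_le_mono) auto
  also have "\<dots> \<le> 2 * 64 ^ s * (2 * 2 ^ fl)" using nfl by simp
  also have "\<dots> = 2 ^ k" using c0e kfl by (simp add: power_add)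
  finally have pk: "2 * 48 ^ s * (N + 1) \<le> (2::nat) ^ k" .
  have "2 * 48 ^ s * ((N + 1) * 2 ^ (N - k)) = (2 * 48 ^ s * (N + 1)) * 2 ^ (N - k)" by (simp only: mult.assoc)
  also have "\<dots> \<le> (2::nat) ^ k * 2 ^ (N - k)" using pk by (rule mult_le_mono1)
  also have "\<dots> = 2 ^ N" using kN by (simp add: power_add[symmetric])
  finally have "real (2 * 48 ^ s * ((N + 1) * 2 ^ (N - k))) \<le> real ((2::nat) ^ N)" by (rule of_nat_mono)
  then have "(2 * 48 ^ s) * real ((N + 1) * 2 ^ (N - k)) \<le> 2 ^ N" by simp
  then have pb: "real ((N + 1) * 2 ^ (N - k)) \<le> 2 ^ N / (2 * 48 ^ s)"
    by (simp add: pos_le_divide_eq mult.commute)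
  have cgood: "real (card {z\<in>Zs a t ls. noF k z}) \<ge> 2 ^ N / (2 * 48 ^ s)"
  proof -
    have "real (card (Zs a t ls)) \<le> real (card {z\<in>Zs a t ls. noF k z} + (N + 1) * 2 ^ (N - k))"
      using cgood0 by (rule of_nat_mono)
    then have c1: "real (card (Zs a t ls)) \<le> real (card {z\<in>Zs a t ls. noF k z}) + real ((N + 1) * 2 ^ (N - k))"
      by (simp only: of_nat_add)
    have "(2::real) ^ N / (2 * 48 ^ s) = 2 ^ N / 48 ^ s - 2 ^ N / (2 * 48 ^ s)" by (simp add: field_simps)
    then show ?thesis using c1 cZ pb by linarith
  qed
  have "(2::nat) ^ n = 2 ^ N * 2 ^ D" using h1 h2 by (simp add: N_def power_add[symmetric])
  moreover have "(2::nat) ^ D \<le> 4 * n * 2 ^ c0" using fln by (simp add: Dk kfl power_add)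
  ultimately have "(2::nat) ^ n \<le> 2 ^ N * (4 * n * 2 ^ c0)" by simp
  then have "real ((2::nat) ^ n) \<le> real (2 ^ N * (4 * n * 2 ^ c0))" by (rule of_nat_mono)
  then have "(2::real) ^ n \<le> 2 ^ N * (4 * n * 2 ^ c0)" by simp
  then have p2: "(2::real) ^ n / (4 * n * 2 ^ c0) \<le> 2 ^ N" using n0
    by (simp add: pos_divide_le_eq)
  have cU: "real (card (Uset k a t ls)) \<ge> 2 ^ n / (8 * n * 2 ^ c0 * 48 ^ s)"
  proof -
    have "2 ^ n / (8 * n * 2 ^ c0 * 48 ^ s) = (2 ^ n / (4 * n * 2 ^ c0)) / (2 * 48 ^ s)" by simp
    also have "\<dots> \<le> 2 ^ N / (2 * 48 ^ s)" using p2 by (intro divide_right_mono) auto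
    finally show ?thesis using cgood card_Uset by simp
  qed
  have cC: "card (Code n k a t ls) = (n choose (n div 2)) * card (Uset k a t ls)"
    using card_Code[OF nsum] card_Gb fe by (simp add: n_def)
  have "1 / (8 * 2 ^ c0 * 48 ^ s) * (real (n choose (n div 2)) * 2 ^ n / real n)
      = real (n choose (n div 2)) * (2 ^ n / (8 * n * 2 ^ c0 * 48 ^ s))" by (simp add: field_simps)
  also have "\<dots> \<le> real (n choose (n div 2)) * real (card (Uset k a t ls))"
    using cU by (intro mult_left_mono) auto
  also have "\<dots> = real (card (Code n k a t ls))" using cC by simp
  also have "\<dots> \<le> real (A_max f n)" using AC by simp
  finally show ?thesis .
qed


lemma eventually_H:
  fixes p :: nat
  assumes "p > 0"
  shows "\<exists>F::nat. \<forall>f\<ge>F. 2 * (200 * p) * (200 * p + 1) * (floor_log (p * f) + (6 * (200 * p) + 2) + 2) ^ 2 \<le> f"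
proof -
  define A :: real where "A = real (2 * (200 * p) * (200 * p + 1))"
  define B :: real where "B = real (6 * (200 * p) + 2) + 2"
  define P :: real where "P = real p"
  have P0: "P > 0" using assms by (simp add: P_def)
  have ev: "\<forall>\<^sub>F x in at_top. A * (log 2 (P * x) + B) ^ 2 \<le> x"
    using P0 by real_asymp
  then obtain X where X: "\<And>x. x \<ge> X \<Longrightarrow> A * (log 2 (P * x) + B) ^ 2 \<le> x"
    by (auto simp: eventually_at_top_linorder)
  define F where "F = nat \<lceil>X\<rceil> + 1"
  show ?thesis
  proof (intro exI[of _ F] allI impI)
    fix f :: nat assume f: "F \<le> f"
    then have f1: "f \<ge> 1" and fX: "real f \<ge> X" by (auto simp: F_def) linarith
    have pf: "p * f \<noteq> 0" using f1 assms by simp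
    have "real (floor_log (p * f)) \<le> log 2 (real (p * f))"
    proof -
      have "1 \<le> p * f" using pf by simp
      then have "1 \<le> real (p * f)" by (metis of_nat_1 of_nat_le_iff)
      then have l0: "0 \<le> log 2 (real (p * f))" by simp
      have "floor_log (p * f) = nat \<lfloor>log 2 (real (p * f))\<rfloor>" using pf by (simp add: floor_log_altdef)
      then show ?thesis using l0 by (simp add: of_nat_nat)
    qed
    then have "real (floor_log (p * f) + (6 * (200 * p) + 2) + 2) \<le> log 2 (P * real f) + B"
      by (simp add: P_def B_def)
    moreover have "0 \<le> real (floor_log (p * f) + (6 * (200 * p) + 2) + 2)" by simp
    ultimately have "real (floor_log (p * f) + (6 * (200 * p) + 2) + 2) ^ 2 \<le> (log 2 (P * real f) + B) ^ 2"
      by (rule power_mono)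
    then have "A * real (floor_log (p * f) + (6 * (200 * p) + 2) + 2) ^ 2 \<le> A * (log 2 (P * real f) + B) ^ 2"
      by (rule mult_left_mono) (simp add: A_def)
    also have "\<dots> \<le> real f" using X[OF fX] .
    finally have "real (2 * (200 * p) * (200 * p + 1) * (floor_log (p * f) + (6 * (200 * p) + 2) + 2) ^ 2) \<le> real f"
      by (simp add: A_def)
    then show "2 * (200 * p) * (200 * p + 1) * (floor_log (p * f) + (6 * (200 * p) + 2) + 2) ^ 2 \<le> f"
      by (simp only: of_nat_le_iff)
  qed
qed

theorem theorem8:
  fixes p :: nat
  assumes "p > 0"
  shows "\<exists>c3::real. c3 > 0 \<and> (\<exists>F. \<forall>f \<ge> F. even f \<longrightarrow>
           (let n = p * f in
              c3 * (real (n choose (n div 2)) * 2 ^ n / real n) \<le> real (A_max f n) \<and>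
              real (A_max f n) \<le> real (n choose (n div 2)) * 2 ^ n / real n))"
proof -
  obtain F where F: "\<And>f. f \<ge> F \<Longrightarrow> 2 * (200 * p) * (200 * p + 1) * (floor_log (p * f) + (6 * (200 * p) + 2) + 2) ^ 2 \<le> f"
    using eventually_H[OF assms] by blast
  define c3 :: real where "c3 = 1 / (8 * 2 ^ (6 * (200 * p) + 2) * 48 ^ (200 * p))"
  have c3: "c3 > 0" by (simp add: c3_def)
  show ?thesis
  proof (intro exI[of _ c3] conjI c3 exI[of _ "max F 1"] allI impI)
    fix f :: nat assume f: "max F 1 \<le> f" and fe: "even f"
    have H: "2 * (200 * p) * (200 * p + 1) * (floor_log (p * f) + (6 * (200 * p) + 2) + 2) ^ 2 \<le> f"
      using F f by simp
    have lb: "c3 * (real ((p * f) choose ((p * f) div 2)) * 2 ^ (p * f) / real (p * f)) \<le> real (A_max f (p * f))"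
      using lower_bound[OF assms fe H] by (simp add: c3_def)
    have n0: "p * f > 0" using f assms by simp
    have ev: "even (p * f)" using fe by simp
    have "real (A_max f (p * f) * (p * f)) \<le> real ((p * f choose (p * f div 2)) * 2 ^ (p * f))"
      using Amax_le[OF ev, of f] by (rule of_nat_mono)
    then have "real (A_max f (p * f)) * real (p * f) \<le> real (p * f choose (p * f div 2)) * 2 ^ (p * f)"
      by simp
    then have ub: "real (A_max f (p * f)) \<le> real (p * f choose (p * f div 2)) * 2 ^ (p * f) / real (p * f)"
      using n0 by (simp add: pos_le_divide_eq)
    show "let n = p * f in
              c3 * (real (n choose (n div 2)) * 2 ^ n / real n) \<le> real (A_max f n) \<and>
              real (A_max f n) \<le> real (n choose (n div 2)) * 2 ^ n / real n"
      using lb ub by (simp add: Let_def)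
  qed
qed


end
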